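(* There is an absolute constant $c>0$ such that for every $m$ there is an instance with two additive buyers and $m$ identical items (each buyer has the same value for all items) such that, for every selling order, there is a tie-breaking rule and a pure subgame perfect equilibrium of the resulting sequential first-price auction whose social welfare is at most $\mathrm{OPT}/(cm)$, where $\mathrm{OPT}$ is the maximum possible social welfare. In other words, the price of anarchy for additive buyers is $\Omega(m)$, even for identical items and for any selling order.
   Context: Setting (sequential first-price auctions): there is a set $M$ of $m$ items and a set $N$ of buyers. A buyer $i$ is additive if there are $v_{i,j}\ge 0$ with $v_i(S)=\sum_{j\in S}v_{i,j}$; utilities are quasi-linear. Items are sold one at a time; each item is sold by a sealed-bid first-price auction without reserve price: every buyer submits a nonnegative bid, a highest bidder wins (ties broken by a tie-breaking rule fixed by the seller) and pays his bid. The seller fixes the selling order (possibly as a function of the allocation of previously sold items) and the tie-breaking rule. There is full information. A pure subgame perfect equilibrium is a profile of pure strategies (a bid for each buyer at each node of the game tree) that is a Nash equilibrium in every subgame. Social welfare is the sum of the buyers' values for their bundles; the price of anarchy is the ratio of the maximum social welfare to the worst social welfare of an equilibrium. *)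

theory Defs
  imports Complex_Main "HOL-Library.FuncSet"
begin

text \<open>Items are the natural numbers 0,...,m-1. Buyers form a (finite) type 'b. A node of the game tree is the
  list of bid profiles submitted in the previous rounds (chronological order).\<close>

type_synonym 'b profile = "'b \<Rightarrow> real"
type_synonym 'b hist = "'b profile list"
type_synonym 'b alloc = "nat \<Rightarrow> 'b option"

text \<open>A selling order: the next item to be sold as a function of the
  allocation of previously sold items. It must choose an unsold item.\<close>
definition valid_order :: "nat \<Rightarrow> ('b alloc \<Rightarrow> nat) \<Rightarrow> bool" where
  "valid_order m ord \<longleftrightarrow>
     (\<forall>A. dom A \<subseteq> {..<m} \<and> card (dom A) < m \<longrightarrow> ord A < m \<and> ord A \<notin> dom A)"

definition valid_tiebreak :: "('b hist \<Rightarrow> 'b profile \<Rightarrow> 'b) \<Rightarrow> bool" where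
  "valid_tiebreak tb \<longleftrightarrow> (\<forall>h b i. b i \<le> b (tb h b))"

text \<open>Allocation reached after a history (given in reverse order).\<close>
primrec allocR :: "('b alloc \<Rightarrow> nat) \<Rightarrow> ('b hist \<Rightarrow> 'b profile \<Rightarrow> 'b) \<Rightarrow> 'b hist \<Rightarrow> 'b alloc" where
  "allocR ord tb [] = Map.empty"
| "allocR ord tb (b # r) = (let A = allocR ord tb r in A(ord A \<mapsto> tb (rev r) b))"

definition alloc_of :: "('b alloc \<Rightarrow> nat) \<Rightarrow> ('b hist \<Rightarrow> 'b profile \<Rightarrow> 'b) \<Rightarrow> 'b hist \<Rightarrow> 'b alloc" where
  "alloc_of ord tb h = allocR ord tb (rev h)"

definition payment :: "('b hist \<Rightarrow> 'b profile \<Rightarrow> 'b) \<Rightarrow> 'b hist \<Rightarrow> 'b \<Rightarrow> real" where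
  "payment tb h i = (\<Sum>t<length h. if tb (take t h) (h ! t) = i then (h ! t) i else 0)"

definition bundle_value :: "nat \<Rightarrow> ('b \<Rightarrow> nat \<Rightarrow> real) \<Rightarrow> 'b alloc \<Rightarrow> 'b \<Rightarrow> real" where
  "bundle_value m v A i = (\<Sum>j<m. if A j = Some i then v i j else 0)"

definition utility :: "nat \<Rightarrow> ('b \<Rightarrow> nat \<Rightarrow> real) \<Rightarrow> ('b alloc \<Rightarrow> nat) \<Rightarrow>
    ('b hist \<Rightarrow> 'b profile \<Rightarrow> 'b) \<Rightarrow> 'b hist \<Rightarrow> 'b \<Rightarrow> real" where
  "utility m v ord tb h i = bundle_value m v (alloc_of ord tb h) i - payment tb h i"

definition welfare :: "nat \<Rightarrow> ('b \<Rightarrow> nat \<Rightarrow> real) \<Rightarrow> 'b alloc \<Rightarrow> real" where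
  "welfare m v A = (\<Sum>j<m. case A j of None \<Rightarrow> 0 | Some i \<Rightarrow> v i j)"

definition opt_welfare :: "nat \<Rightarrow> ('b \<Rightarrow> nat \<Rightarrow> real) \<Rightarrow> real" where
  "opt_welfare m v = Max ((\<lambda>f. \<Sum>j<m. v (f j) j) ` ({..<m} \<rightarrow>\<^sub>E UNIV))"

text \<open>Pure strategy profile: s i h is the bid of buyer i at node h.
  Playing n further rounds from node h.\<close>
primrec extend :: "('b \<Rightarrow> 'b hist \<Rightarrow> real) \<Rightarrow> nat \<Rightarrow> 'b hist \<Rightarrow> 'b hist" where
  "extend s 0 h = h"
| "extend s (Suc n) h = extend s n (h @ [(\<lambda>i. s i h)])"

definition outcome :: "nat \<Rightarrow> ('b \<Rightarrow> 'b hist \<Rightarrow> real) \<Rightarrow> 'b hist \<Rightarrow> 'b hist" where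
  "outcome m s h = extend s (m - length h) h"

definition is_SPE :: "nat \<Rightarrow> ('b \<Rightarrow> nat \<Rightarrow> real) \<Rightarrow> ('b alloc \<Rightarrow> nat) \<Rightarrow>
    ('b hist \<Rightarrow> 'b profile \<Rightarrow> 'b) \<Rightarrow> ('b \<Rightarrow> 'b hist \<Rightarrow> real) \<Rightarrow> bool" where
  "is_SPE m v ord tb s \<longleftrightarrow>
     (\<forall>i h. 0 \<le> s i h) \<and>
     (\<forall>h. length h \<le> m \<longrightarrow> (\<forall>b\<in>set h. \<forall>i. 0 \<le> b i) \<longrightarrow>
        (\<forall>i s'. (\<forall>h'. 0 \<le> s' h') \<longrightarrow>
           utility m v ord tb (outcome m (s(i := s')) h) i
             \<le> utility m v ord tb (outcome m s h) i))"

datatype buyer = Buyer1 | Buyer2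

lemma UNIV_buyer: "(UNIV :: buyer set) = {Buyer1, Buyer2}"
  using buyer.exhaust by auto

instance buyer :: finite
  by standard (simp add: UNIV_buyer)

end

theory Submission
  imports Defs
begin

definition good :: "buyer hist \<Rightarrow> bool" where
  "good h = (\<forall>b\<in>set h. b Buyer1 = 0)"

definition strat :: "buyer \<Rightarrow> buyer hist \<Rightarrow> real" where
  "strat i h = (if good h then 0 else 1)"

definition tbr :: "nat \<Rightarrow> buyer hist \<Rightarrow> buyer profile \<Rightarrow> buyer" where
  "tbr m h b = (if b Buyer2 > b Buyer1 then Buyer2 else if b Buyer1 > b Buyer2 then Buyer1
     else if b Buyer1 = 0 \<and> Suc (length h) < m then Buyer2 else Buyer1)"

definition valf :: "buyer \<Rightarrow> real" where
  "valf i = (if i = Buyer1 then 1 else 0)"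

definition vv :: "buyer \<Rightarrow> nat \<Rightarrow> real" where
  "vv i j = valf i"

lemma good_snoc[simp]: "good (h @ [b]) \<longleftrightarrow> good h \<and> b Buyer1 = 0"
  by (auto simp: good_def)

lemma good_Nil[simp]: "good []"
  by (simp add: good_def)

lemma alloc_snoc: "alloc_of ord tb (H @ [b]) = (alloc_of ord tb H)(ord (alloc_of ord tb H) \<mapsto> tb H b)"
  by (simp add: alloc_of_def Let_def)

lemma alloc_inv:
  assumes "valid_order m ord"
  shows "length H \<le> m \<Longrightarrow> dom (alloc_of ord tb H) \<subseteq> {..<m} \<and> finite (dom (alloc_of ord tb H))
     \<and> card (dom (alloc_of ord tb H)) = length H"
proof (induction H rule: rev_induct)
  case Nil
  then show ?case by (simp add: alloc_of_def)
next
  case (snoc b H)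
  define A where "A = alloc_of ord tb H"
  have IH: "dom A \<subseteq> {..<m} \<and> finite (dom A) \<and> card (dom A) = length H"
    using snoc by (simp add: A_def)
  have "length H < m" using snoc by simp
  then have k: "ord A < m" "ord A \<notin> dom A"
    using assms IH unfolding valid_order_def by auto
  have d: "dom (A(ord A \<mapsto> tb H b)) = insert (ord A) (dom A)" by simp
  show ?case using IH k unfolding alloc_snoc A_def[symmetric] d
    by simp
qed

lemma payment_snoc: "payment tb (H @ [b]) i = payment tb H i + (if tb H b = i then b i else 0)"
proof -
  have "payment tb (H @ [b]) i = (\<Sum>t<Suc (length H). if tb (take t (H @ [b])) ((H @ [b]) ! t) = i then ((H @ [b]) ! t) i else 0)"
    by (simp add: payment_def)
  also have "\<dots> = (\<Sum>t<length H. if tb (take t (H @ [b])) ((H @ [b]) ! t) = i then ((H @ [b]) ! t) i else 0)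
      + (if tb H b = i then b i else 0)"
    by simp
  also have "(\<Sum>t<length H. if tb (take t (H @ [b])) ((H @ [b]) ! t) = i then ((H @ [b]) ! t) i else 0)
      = payment tb H i"
    unfolding payment_def by (rule sum.cong) (auto simp: nth_append)
  finally show ?thesis .
qed

lemma bundle_snoc:
  assumes "valid_order m ord" "length H < m"
  shows "bundle_value m vv (alloc_of ord tb (H @ [b])) i
      = bundle_value m vv (alloc_of ord tb H) i + (if tb H b = i then valf i else 0)"
proof -
  define A where "A = alloc_of ord tb H"
  define k where "k = ord A"
  have IH: "dom A \<subseteq> {..<m} \<and> finite (dom A) \<and> card (dom A) = length H"
    using alloc_inv[OF assms(1), of H tb] assms(2) by (simp add: A_def)
  then have k: "k < m" "k \<notin> dom A"
    using assms unfolding valid_order_def k_def by auto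
  have fin: "finite {..<m}" by simp
  have "bundle_value m vv (A(k \<mapsto> tb H b)) i
     = (if tb H b = i then valf i else 0) + (\<Sum>j\<in>{..<m}-{k}. if (A(k \<mapsto> tb H b)) j = Some i then vv i j else 0)"
    unfolding bundle_value_def using k by (subst sum.remove[OF fin, of k]) (auto simp: vv_def)
  also have "(\<Sum>j\<in>{..<m}-{k}. if (A(k \<mapsto> tb H b)) j = Some i then vv i j else 0)
      = (\<Sum>j\<in>{..<m}-{k}. if A j = Some i then vv i j else 0)"
    by (rule sum.cong) auto
  also have "\<dots> = bundle_value m vv A i"
    unfolding bundle_value_def using k sum.remove[OF fin, of k "\<lambda>j. if A j = Some i then vv i j else 0"]
    by (auto simp: domIff)
  finally have "bundle_value m vv (A(k \<mapsto> tb H b)) i = (if tb H b = i then valf i else 0) + bundle_value m vv A i" .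
  then show ?thesis unfolding alloc_snoc A_def[symmetric] k_def[symmetric] by simp
qed

lemma utility_snoc:
  assumes "valid_order m ord" "length H < m"
  shows "utility m vv ord tb (H @ [b]) i
      = utility m vv ord tb H i + (if tb H b = i then valf i - b i else 0)"
  unfolding utility_def using bundle_snoc[OF assms, of tb b i] payment_snoc[of tb H b i]
  by simp

lemma dev1_bad:
  assumes vo: "valid_order m ord" and SS: "S Buyer2 = strat Buyer2"
  shows "\<not> good h \<Longrightarrow> length h + n = m \<Longrightarrow>
    utility m vv ord (tbr m) (extend (S) n h) Buyer1 \<le> utility m vv ord (tbr m) h Buyer1"
proof (induction n arbitrary: h)
  case 0
  then show ?case by simp
next
  case (Suc n)
  define b where "b = (\<lambda>i. (S) i h)"
  have b1: "b Buyer1 = S Buyer1 h" and b2: "b Buyer2 = 1" using Suc.prems SS by (auto simp: b_def strat_def)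
  have ng: "\<not> good (h @ [b])" using Suc.prems by simp
  have "utility m vv ord (tbr m) (extend (S) n (h @ [b])) Buyer1
      \<le> utility m vv ord (tbr m) (h @ [b]) Buyer1"
    using Suc.IH[OF ng] Suc.prems by simp
  also have "\<dots> = utility m vv ord (tbr m) h Buyer1 + (if tbr m h b = Buyer1 then valf Buyer1 - b Buyer1 else 0)"
    using utility_snoc[OF vo] Suc.prems by simp
  also have "\<dots> \<le> utility m vv ord (tbr m) h Buyer1"
    using b1 b2 by (auto simp: tbr_def valf_def)
  finally show ?case by (simp add: b_def)
qed

lemma dev1_good:
  assumes vo: "valid_order m ord" and SS: "S Buyer2 = strat Buyer2"
  shows "good h \<Longrightarrow> length h + n = m \<Longrightarrow>
    utility m vv ord (tbr m) (extend (S) n h) Buyer1 \<le> utility m vv ord (tbr m) h Buyer1 + (if n = 0 then 0 else 1)"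
proof (induction n arbitrary: h)
  case 0
  then show ?case by simp
next
  case (Suc n)
  define b where "b = (\<lambda>i. (S) i h)"
  have b1: "b Buyer1 = S Buyer1 h" and b2: "b Buyer2 = 0" using Suc.prems SS by (auto simp: b_def strat_def)
  have st: "utility m vv ord (tbr m) (h @ [b]) Buyer1 = utility m vv ord (tbr m) h Buyer1 + (if tbr m h b = Buyer1 then valf Buyer1 - b Buyer1 else 0)"
    using utility_snoc[OF vo] Suc.prems by simp
  have ext: "extend (S) (Suc n) h = extend (S) n (h @ [b])"
    by (simp add: b_def)
  show ?case
  proof (cases "S Buyer1 h = 0")
    case True
    have g: "good (h @ [b])" using Suc.prems True b1 by simp
    show ?thesis
    proof (cases "Suc (length h) < m")
      case True
      then have "tbr m h b = Buyer2" using b1 b2 \<open>S Buyer1 h = 0\<close> by (simp add: tbr_def)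
      then show ?thesis using Suc.IH[OF g] Suc.prems st ext by (auto split: if_splits)
    next
      case False
      then have "n = 0" using Suc.prems by simp
      then show ?thesis using st ext \<open>S Buyer1 h = 0\<close> by (auto simp: valf_def b1)
    qed
  next
    case False
    have ng: "\<not> good (h @ [b])" using False b1 by simp
    have "utility m vv ord (tbr m) (extend (S) n (h @ [b])) Buyer1
      \<le> utility m vv ord (tbr m) (h @ [b]) Buyer1"
      using dev1_bad[where S=S, OF vo SS ng] Suc.prems by simp
    moreover have "(if tbr m h b = Buyer1 then valf Buyer1 - b Buyer1 else 0) \<le> 1"
      using b1 b2 by (auto simp: tbr_def valf_def)
    ultimately show ?thesis using st ext by simp
  qed
qed

lemma eq1:
  assumes vo: "valid_order m ord"
  shows "length h + n = m \<Longrightarrow>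
    utility m vv ord (tbr m) (extend strat n h) Buyer1 = utility m vv ord (tbr m) h Buyer1 + (if good h \<and> n > 0 then 1 else 0)
    \<and> payment (tbr m) (extend strat n h) Buyer1 = payment (tbr m) h Buyer1 + (if good h then 0 else real n)"
proof (induction n arbitrary: h)
  case 0
  then show ?case by simp
next
  case (Suc n)
  define b where "b = (\<lambda>i. strat i h)"
  have ext: "extend strat (Suc n) h = extend strat n (h @ [b])"
    by (simp add: b_def)
  have st: "utility m vv ord (tbr m) (h @ [b]) Buyer1 = utility m vv ord (tbr m) h Buyer1 + (if tbr m h b = Buyer1 then valf Buyer1 - b Buyer1 else 0)"
    using utility_snoc[OF vo] Suc.prems by simp
  have pt: "payment (tbr m) (h @ [b]) Buyer1 = payment (tbr m) h Buyer1 + (if tbr m h b = Buyer1 then b Buyer1 else 0)"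
    by (rule payment_snoc)
  have IH: "utility m vv ord (tbr m) (extend strat n (h @ [b])) Buyer1 = utility m vv ord (tbr m) (h @ [b]) Buyer1 + (if good (h @ [b]) \<and> n > 0 then 1 else 0)
    \<and> payment (tbr m) (extend strat n (h @ [b])) Buyer1 = payment (tbr m) (h @ [b]) Buyer1 + (if good (h @ [b]) then 0 else real n)"
    using Suc.IH[of "h @ [b]"] Suc.prems by simp
  show ?case
  proof (cases "good h")
    case True
    then have b1: "b Buyer1 = 0" "b Buyer2 = 0" by (auto simp: b_def strat_def)
    show ?thesis
    proof (cases "Suc (length h) < m")
      case True
      then have "tbr m h b = Buyer2" using b1 by (simp add: tbr_def)
      then show ?thesis using IH st pt ext b1 \<open>good h\<close> True Suc.prems by auto
    next
      case False
      then have "tbr m h b = Buyer1" using b1 by (simp add: tbr_def)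
      moreover have "n = 0" using False Suc.prems by simp
      ultimately show ?thesis using IH st pt ext b1 \<open>good h\<close> by (auto simp: valf_def)
    qed
  next
    case False
    then have b1: "b Buyer1 = 1" "b Buyer2 = 1" by (auto simp: b_def strat_def)
    then have "tbr m h b = Buyer1" by (simp add: tbr_def)
    then show ?thesis using IH st pt ext b1 False by (auto simp: valf_def)
  qed
qed

lemma dev2:
  assumes vo: "valid_order m ord" and SS: "S Buyer1 = strat Buyer1"
  shows "length h + n = m \<Longrightarrow>
    utility m vv ord (tbr m) (extend (S) n h) Buyer2 \<le> utility m vv ord (tbr m) h Buyer2"
proof (induction n arbitrary: h)
  case 0
  then show ?case by simp
next
  case (Suc n)
  define b where "b = (\<lambda>i. (S) i h)"
  have b1: "b Buyer1 \<ge> 0" using SS by (auto simp: b_def strat_def)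
  have "utility m vv ord (tbr m) (extend (S) n (h @ [b])) Buyer2
      \<le> utility m vv ord (tbr m) (h @ [b]) Buyer2"
    using Suc.IH[of "h @ [b]"] Suc.prems by simp
  also have "\<dots> = utility m vv ord (tbr m) h Buyer2 + (if tbr m h b = Buyer2 then valf Buyer2 - b Buyer2 else 0)"
    using utility_snoc[OF vo] Suc.prems by simp
  also have "\<dots> \<le> utility m vv ord (tbr m) h Buyer2"
    using b1 by (auto simp: tbr_def valf_def)
  finally show ?case by (simp add: b_def)
qed

lemma eq2:
  assumes vo: "valid_order m ord"
  shows "length h + n = m \<Longrightarrow>
    utility m vv ord (tbr m) (extend strat n h) Buyer2 = utility m vv ord (tbr m) h Buyer2"
proof (induction n arbitrary: h)
  case 0
  then show ?case by simp
next
  case (Suc n)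
  define b where "b = (\<lambda>i. strat i h)"
  have b1: "b Buyer1 = b Buyer2" "b Buyer1 = 0 \<or> b Buyer1 = 1" by (auto simp: b_def strat_def)
  have "utility m vv ord (tbr m) (extend strat n (h @ [b])) Buyer2
      = utility m vv ord (tbr m) (h @ [b]) Buyer2"
    using Suc.IH[of "h @ [b]"] Suc.prems by simp
  also have "\<dots> = utility m vv ord (tbr m) h Buyer2 + (if tbr m h b = Buyer2 then valf Buyer2 - b Buyer2 else 0)"
    using utility_snoc[OF vo] Suc.prems by simp
  also have "\<dots> = utility m vv ord (tbr m) h Buyer2"
    using b1 by (auto simp: tbr_def valf_def)
  finally show ?case by (simp add: b_def)
qed


lemma tb_valid: "valid_tiebreak (tbr m)"
  unfolding valid_tiebreak_def
proof (intro allI)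
  fix h and b :: "buyer profile" and i
  show "b i \<le> b (tbr m h b)"
    by (cases i) (auto simp: tbr_def)
qed

lemma opt_ge: "real m \<le> opt_welfare m vv"
proof -
  define f where "f = (\<lambda>j::nat. if j < m then Buyer1 else undefined)"
  have fin: "finite ({..<m} \<rightarrow>\<^sub>E (UNIV :: buyer set))"
    by (intro finite_PiE) auto
  have fin2: "finite ((\<lambda>f. \<Sum>j<m. vv (f j) j) ` ({..<m} \<rightarrow>\<^sub>E (UNIV :: buyer set)))"
    using fin by simp
  have fm: "f \<in> {..<m} \<rightarrow>\<^sub>E UNIV" unfolding f_def by (auto simp: PiE_iff extensional_def)
  have "(\<Sum>j<m. vv (f j) j) = real m"
    by (simp add: f_def vv_def valf_def)
  then show ?thesis unfolding opt_welfare_def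
    using Max_ge[OF fin2, of "\<Sum>j<m. vv (f j) j"] fm
    by (metis (no_types, lifting) image_eqI)
qed

lemma is_SPE_strat:
  assumes vo: "valid_order m ord"
  shows "is_SPE m vv ord (tbr m) strat"
  unfolding is_SPE_def
proof (intro conjI allI impI)
  fix i h show "0 \<le> strat i h" by (simp add: strat_def)
next
  fix h :: "buyer hist" and i and s' :: "buyer hist \<Rightarrow> real"
  assume len: "length h \<le> m" and nn: "\<forall>h'. 0 \<le> s' h'"
  define n where "n = m - length h"
  have ln: "length h + n = m" using len by (simp add: n_def)
  have oc: "outcome m X h = extend X n h" for X by (simp add: outcome_def n_def)
  show "utility m vv ord (tbr m) (outcome m (strat(i := s')) h) i
           \<le> utility m vv ord (tbr m) (outcome m strat h) i"
  proof (cases i)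
    case Buyer1
    have SS: "(strat(Buyer1 := s')) Buyer2 = strat Buyer2" by simp
    have e: "utility m vv ord (tbr m) (extend strat n h) Buyer1 = utility m vv ord (tbr m) h Buyer1 + (if good h \<and> n > 0 then 1 else 0)"
      using eq1[OF vo ln] by blast
    show ?thesis
    proof (cases "good h")
      case True
      show ?thesis using dev1_good[where S="strat(Buyer1 := s')", OF vo SS True ln] e True Buyer1 by (auto simp: oc)
    next
      case False
      show ?thesis using dev1_bad[where S="strat(Buyer1 := s')", OF vo SS False ln] e False Buyer1 by (auto simp: oc)
    qed
  next
    case Buyer2
    have SS: "(strat(Buyer2 := s')) Buyer1 = strat Buyer1" by simp
    show ?thesis using dev2[where S="strat(Buyer2 := s')", OF vo SS ln] eq2[OF vo ln] Buyer2 by (simp add: oc)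
  qed
qed

lemma welfare_eq: "welfare m vv A = bundle_value m vv A Buyer1"
  unfolding welfare_def bundle_value_def
  by (rule sum.cong) (auto simp: vv_def valf_def split: option.splits buyer.splits)

lemma welfare_path:
  assumes vo: "valid_order m ord" and m: "m \<ge> 1"
  shows "welfare m vv (alloc_of ord (tbr m) (outcome m strat [])) = 1"
proof -
  have e: "utility m vv ord (tbr m) (extend strat m []) Buyer1 = utility m vv ord (tbr m) [] Buyer1 + 1
    \<and> payment (tbr m) (extend strat m []) Buyer1 = payment (tbr m) [] Buyer1"
    using eq1[OF vo, of "[]" m] m by simp
  have u0: "utility m vv ord (tbr m) [] Buyer1 = 0"
    by (simp add: utility_def bundle_value_def payment_def alloc_of_def)
  have p0: "payment (tbr m) [] Buyer1 = 0" by (simp add: payment_def)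
  show ?thesis using e u0 p0 unfolding welfare_eq outcome_def utility_def by simp
qed

theorem mainTheorem3:
  shows "\<exists>c::real. c > 0 \<and>
    (\<forall>m::nat. m \<ge> 1 \<longrightarrow>
      (\<exists>v :: buyer \<Rightarrow> nat \<Rightarrow> real.
         (\<forall>i j. 0 \<le> v i j) \<and>
         (\<forall>i. \<forall>j<m. \<forall>j'<m. v i j = v i j') \<and>
         opt_welfare m v > 0 \<and>
         (\<forall>ord :: buyer alloc \<Rightarrow> nat. valid_order m ord \<longrightarrow>
            (\<exists>tb. valid_tiebreak tb \<and>
               (\<exists>s. is_SPE m v ord tb s \<and>
                  welfare m v (alloc_of ord tb (outcome m s [])) \<le> opt_welfare m v / (c * real m))))))"
proof (intro exI[of _ 1] conjI allI impI)
  fix m :: nat assume m: "m \<ge> 1"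
  have og: "real m \<le> opt_welfare m vv" by (rule opt_ge)
  show "\<exists>v :: buyer \<Rightarrow> nat \<Rightarrow> real.
         (\<forall>i j. 0 \<le> v i j) \<and>
         (\<forall>i. \<forall>j<m. \<forall>j'<m. v i j = v i j') \<and>
         opt_welfare m v > 0 \<and>
         (\<forall>ord :: buyer alloc \<Rightarrow> nat. valid_order m ord \<longrightarrow>
            (\<exists>tb. valid_tiebreak tb \<and>
               (\<exists>s. is_SPE m v ord tb s \<and>
                  welfare m v (alloc_of ord tb (outcome m s [])) \<le> opt_welfare m v / (1 * real m))))"
  proof (intro exI[of _ vv] conjI allI impI)
    fix i j show "0 \<le> vv i j" by (simp add: vv_def valf_def)
  next
    fix i j j' show "vv i j = vv i j'" by (simp add: vv_def)
  next
    show "opt_welfare m vv > 0" using og m by linarith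
  next
    fix ord :: "buyer alloc \<Rightarrow> nat" assume vo: "valid_order m ord"
    have "1 \<le> opt_welfare m vv / (1 * real m)"
      using og m by (simp add: divide_simps)
    then show "\<exists>tb. valid_tiebreak tb \<and>
               (\<exists>s. is_SPE m vv ord tb s \<and>
                  welfare m vv (alloc_of ord tb (outcome m s [])) \<le> opt_welfare m vv / (1 * real m))"
      using tb_valid[of m] is_SPE_strat[OF vo] welfare_path[OF vo m]
      by (intro exI[of _ "tbr m"] conjI exI[of _ strat]) auto
  qed
qed simp

end
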